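(* Let $p\in(0,1)$, let $t$ be a formal indeterminate, and for $n\ge1$ let $X_n$ be the maximum weight of a directed path from $1$ to $n$ in the transitive tournament on $\{1,\ldots,n\}$ with independent $\mathrm{Bernoulli}(p)$ edge weights. Write $\mathbb{E}[Y_n]=\mathbb{E}[t^{X_n}]=\sum_{k\ge0}\Pr[X_n=k]\,t^k$ for the probability generating function. Then for every $n\ge1$, \[ \mathbb{E}[Y_n]=\sum_{i=1}^{n-1} t\left[(1-p)^{\binom{i}{2}}-(1-p)^{\binom{i+1}{2}}\right]\mathbb{E}[Y_{n-i}]+(1-p)^{\binom{n}{2}}. \] Consequently, with $\mathbb{E}[Y_0]:=1$ and $Z(x,t)=\sum_{n\ge0}\mathbb{E}[Y_n]x^n$, we have \[ Z(x,t)=1+\frac{xB_p(x)}{1-t\,[A_p(x)-B_p(x)]}, \] where $A_p(x)=\sum_{n\ge0}(1-p)^{\binom{n}{2}}x^n$ and $B_p(x)=\sum_{n\ge0}(1-p)^{\binom{n+1}{2}}x^n$.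
   Context: The transitive tournament on $\{1,\ldots,n\}$ has a directed edge $(i,j)$ for every $1\le i<j\le n$. The edge weights $w(i,j)\in\{0,1\}$ are independent, and each equals $1$ with probability $p$. The weight of a path is the sum of its edge weights, and $X_n$ is the maximum weight of a directed path from $1$ to $n$; in particular $X_1=0$. Binomial coefficients satisfy $\binom{0}{2}=\binom{1}{2}=0$. The identity for $Z$ is an identity of formal power series in $x$ whose coefficients are polynomials in $t$. *)

theory Defs
  imports "HOL-Computational_Algebra.Polynomial" "HOL-Computational_Algebra.Formal_Power_Series"
begin

definition edges :: "nat \<Rightarrow> (nat \<times> nat) set" where
  "edges n = {(i, j). 1 \<le> i \<and> i < j \<and> j \<le> n}"

definition is_path :: "nat \<Rightarrow> nat list \<Rightarrow> bool" where
  "is_path n xs \<longleftrightarrow> xs \<noteq> [] \<and> sorted_wrt (<) xs \<and> hd xs = 1 \<and> last xs = n \<and> set xs \<subseteq> {1..n}"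

text \<open>A weight configuration is the set S of edges with weight 1.\<close>
definition path_weight :: "(nat \<times> nat) set \<Rightarrow> nat list \<Rightarrow> nat" where
  "path_weight S xs = sum_list (map (\<lambda>e. if e \<in> S then 1 else 0) (zip xs (tl xs)))"

definition maxw :: "nat \<Rightarrow> (nat \<times> nat) set \<Rightarrow> nat" where
  "maxw n S = Max {path_weight S xs | xs. is_path n xs}"

definition config_prob :: "real \<Rightarrow> nat \<Rightarrow> (nat \<times> nat) set \<Rightarrow> real" where
  "config_prob p n S = p ^ card S * (1 - p) ^ card (edges n - S)"

text \<open>Probability generating function E[t^{X_n}] as a polynomial in t.\<close>
definition pgf :: "real \<Rightarrow> nat \<Rightarrow> real poly" where
  "pgf p n = (\<Sum>S\<in>Pow (edges n). smult (config_prob p n S) ([:0, 1:] ^ maxw n S))"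

definition EY :: "real \<Rightarrow> nat \<Rightarrow> real poly" where
  "EY p n = (if n = 0 then 1 else pgf p n)"

definition Zfps :: "real \<Rightarrow> real poly fps" where
  "Zfps p = Abs_fps (EY p)"

definition Afps :: "real \<Rightarrow> real poly fps" where
  "Afps p = Abs_fps (\<lambda>n. [:(1 - p) ^ (n choose 2):])"

definition Bfps :: "real \<Rightarrow> real poly fps" where
  "Bfps p = Abs_fps (\<lambda>n. [:(1 - p) ^ ((n + 1) choose 2):])"

end

theory Submission
  imports Defs
begin


lemma pw_nil[simp]: "path_weight S [] = 0" by (simp add: path_weight_def)
lemma pw_single[simp]: "path_weight S [x] = 0" by (simp add: path_weight_def)
lemma pw_cons2[simp]: "path_weight S (x # y # xs) = (if (x,y) \<in> S then 1 else 0) + path_weight S (y # xs)"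
  by (simp add: path_weight_def)

lemma pw_le_len: "path_weight S xs \<le> length xs"
  by (induction xs rule: induct_list012) auto

lemma pw_append: "xs \<noteq> [] \<Longrightarrow> ys \<noteq> [] \<Longrightarrow>
  path_weight S (xs @ ys) = path_weight S xs + (if (last xs, hd ys) \<in> S then 1 else 0) + path_weight S ys"
proof (induction xs rule: induct_list012)
  case (3 x y zs)
  then show ?case by (cases zs) auto
qed (auto simp: neq_Nil_conv)

lemma pw_zero: "\<forall>x\<in>set xs. x < j \<Longrightarrow> \<forall>(a,b)\<in>S. j \<le> b \<Longrightarrow> path_weight S xs = 0"
  by (induction xs rule: induct_list012) auto

lemma pw_shift:
  assumes "\<forall>x y. 1 \<le> x \<longrightarrow> ((x+d, y+d) \<in> S \<longleftrightarrow> (x,y) \<in> D)"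
  shows "\<forall>x\<in>set zs. x > d \<Longrightarrow> path_weight S zs = path_weight D (map (\<lambda>x. x - d) zs)"
proof (induction zs rule: induct_list012)
  case (3 x y zs)
  have "(x,y) \<in> S \<longleftrightarrow> (x-d, y-d) \<in> D" using assms[rule_format, of "x-d" "y-d"] 3(3) by auto
  then show ?case using 3 by auto
qed auto

lemma path_len: "is_path n xs \<Longrightarrow> length xs \<le> n"
proof -
  assume "is_path n xs"
  then have "distinct xs" "set xs \<subseteq> {1..n}" by (auto simp: is_path_def strict_sorted_iff)
  then show ?thesis using distinct_card[of xs] card_mono[of "{1..n}" "set xs"] by auto
qed

lemma path_ex: "n \<ge> 1 \<Longrightarrow> is_path n (if n = 1 then [1] else [1,n])"
  by (auto simp: is_path_def)

lemma fin_w: "finite {path_weight S xs | xs. is_path n xs}"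
proof (rule finite_subset[of _ "{0..n}"])
  show "{path_weight S xs | xs. is_path n xs} \<subseteq> {0..n}"
    using pw_le_len path_len by (auto intro: order.trans[OF pw_le_len path_len])
qed auto

lemma ne_w: "n \<ge> 1 \<Longrightarrow> {path_weight S xs | xs. is_path n xs} \<noteq> {}"
  using path_ex by blast

lemma maxw_ge: "is_path n xs \<Longrightarrow> path_weight S xs \<le> maxw n S"
  unfolding maxw_def by (rule Max_ge[OF fin_w]) auto

lemma maxw_le: "n \<ge> 1 \<Longrightarrow> (\<And>xs. is_path n xs \<Longrightarrow> path_weight S xs \<le> k) \<Longrightarrow> maxw n S \<le> k"
  unfolding maxw_def using fin_w ne_w by (subst Max_le_iff) auto




lemma sorted_map_sub: "\<forall>x\<in>set (zs::nat list). x > i \<Longrightarrow> sorted_wrt (<) zs \<Longrightarrow> sorted_wrt (<) (map (\<lambda>x. x - i) zs)"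
proof (induction zs)
  case (Cons a zs)
  have "a - i < x - i" if "x \<in> set zs" for x
  proof -
    have "a < x" "i < a" using Cons.prems that by auto
    then show ?thesis by linarith
  qed
  then show ?case using Cons by (auto simp: sorted_wrt_map)
qed simp

lemma maxw_split:
  assumes i: "1 \<le> i" "i < n" and noS: "\<forall>(a,b)\<in>S. i < b" and a0: "(a0, Suc i) \<in> S" "1 \<le> a0" "a0 < Suc i"
    and DS: "\<forall>x y. 1 \<le> x \<longrightarrow> ((x+i, y+i) \<in> S \<longleftrightarrow> (x,y) \<in> D)"
  shows "maxw n S = 1 + maxw (n - i) D"
proof (rule antisym)
  have pwsh: "\<And>zs. \<forall>x\<in>set zs. x > i \<Longrightarrow> path_weight S zs = path_weight D (map (\<lambda>x. x - i) zs)"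
    using pw_shift[OF DS] by blast
  show "maxw n S \<le> 1 + maxw (n - i) D"
  proof (rule maxw_le)
    show "1 \<le> n" using i by simp
    fix xs assume xs: "is_path n xs"
    define pre where "pre = takeWhile (\<lambda>x. x \<le> i) xs"
    define post where "post = dropWhile (\<lambda>x. x \<le> i) xs"
    have xsd: "xs = pre @ post" by (simp add: pre_def post_def)
    have xne: "xs \<noteq> []" "hd xs = 1" "last xs = n" "sorted_wrt (<) xs" "set xs \<subseteq> {1..n}"
      using xs by (auto simp: is_path_def)
    have prene: "pre \<noteq> []" using xne i by (cases xs) (auto simp: pre_def)
    have postne: "post \<noteq> []"
    proof
      assume "post = []"
      then have "\<forall>x\<in>set xs. x \<le> i" by (simp add: post_def dropWhile_eq_Nil_conv)
      then show False using xne i last_in_set[of xs] by auto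
    qed
    have prel: "\<forall>x\<in>set pre. x < Suc i" by (auto simp: pre_def dest: set_takeWhileD)
    have postg: "\<forall>x\<in>set post. x > i"
    proof
      fix x assume "x \<in> set post"
      moreover have "hd post > i" using postne hd_dropWhile[of "\<lambda>x. x \<le> i" xs] by (simp add: post_def)
      moreover have "sorted_wrt (<) post" using xne(4) xsd sorted_wrt_append by metis
      ultimately show "x > i" using postne by (cases post) auto
    qed
    have pw0: "path_weight S pre = 0"
      by (rule pw_zero[of _ "Suc i"]) (use prel noS in auto)
    have "path_weight S xs \<le> 0 + 1 + path_weight S post"
      using pw_append[OF prene postne, of S] xsd pw0 by simp
    define zs where "zs = (if hd post = Suc i then post else Suc i # post)"
    have spost: "sorted_wrt (<) post" using xne(4) xsd sorted_wrt_append by metis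
    have lpost: "last post = n" using xne(3) xsd postne by simp
    have postle: "set post \<subseteq> {1..n}" using xne(5) xsd by auto
    have "path_weight S post \<le> path_weight S zs"
      using postne by (cases post) (auto simp: zs_def)
    have zsg: "\<forall>x\<in>set zs. x > i" using postg by (auto simp: zs_def)
    have zs_sorted: "sorted_wrt (<) zs"
      using spost postg postne by (cases post) (auto simp: zs_def)
    define ys where "ys = map (\<lambda>x. x - i) zs"
    have "is_path (n - i) ys"
      unfolding is_path_def ys_def
    proof (intro conjI)
      show "map (\<lambda>x. x - i) zs \<noteq> []" by (simp add: zs_def postne)
      show "sorted_wrt (<) (map (\<lambda>x. x - i) zs)" by (rule sorted_map_sub[OF zsg zs_sorted])
      show "hd (map (\<lambda>x. x - i) zs) = 1" using postne by (cases post) (auto simp: zs_def)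
      show "last (map (\<lambda>x. x - i) zs) = n - i" using postne lpost by (auto simp: zs_def last_map)
      have pb: "\<And>x. x \<in> set post \<Longrightarrow> i < x \<and> x \<le> n" using postle postg by auto
      then show "set (map (\<lambda>x. x - i) zs) \<subseteq> {1..n - i}" using i by (auto simp: zs_def dest!: pb)
    qed
    then have "path_weight D ys \<le> maxw (n - i) D" by (rule maxw_ge)
    then show "path_weight S xs \<le> 1 + maxw (n - i) D"
      using pwsh[OF zsg] \<open>path_weight S xs \<le> 0 + 1 + path_weight S post\<close>
        \<open>path_weight S post \<le> path_weight S zs\<close> by (simp add: ys_def)
  qed
next
  have pwsh: "\<And>zs. \<forall>x\<in>set zs. x > i \<Longrightarrow> path_weight S zs = path_weight D (map (\<lambda>x. x - i) zs)"
    using pw_shift[OF DS] by blast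
  have key: "1 + path_weight D ys \<le> maxw n S" if ys: "is_path (n - i) ys" for ys
  proof -
    have yne: "ys \<noteq> []" "hd ys = 1" "last ys = n - i" "sorted_wrt (<) ys" "set ys \<subseteq> {1..n - i}"
      using ys by (auto simp: is_path_def)
    have yb: "\<And>x. x \<in> set ys \<Longrightarrow> 1 \<le> x \<and> x \<le> n - i" using yne by auto
    define zs where "zs = map (\<lambda>x. x + i) ys"
    define pre where "pre = (if a0 = 1 then [1] else [1, a0])"
    have zsg: "\<forall>x\<in>set zs. x > i" using yne by (auto simp: zs_def dest!: yb)
    have "map (\<lambda>x. x - i) zs = ys" by (simp add: zs_def comp_def)
    then have pz: "path_weight S zs = path_weight D ys" using pwsh[OF zsg] by simp
    have zne: "zs \<noteq> []" "hd zs = Suc i" using yne by (auto simp: zs_def hd_map)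
    have pne: "pre \<noteq> []" "last pre = a0" by (auto simp: pre_def)
    have "path_weight S (pre @ zs) = path_weight S pre + 1 + path_weight S zs"
      using pw_append[OF pne(1) zne(1), of S] pne zne a0 by simp
    moreover have "is_path n (pre @ zs)"
      unfolding is_path_def
    proof (intro conjI)
      show "pre @ zs \<noteq> []" using pne by simp
      show "hd (pre @ zs) = 1" by (simp add: pre_def)
      show "last (pre @ zs) = n" using zne yne i by (simp add: zs_def last_map)
      show "set (pre @ zs) \<subseteq> {1..n}" using a0 i by (auto simp: zs_def pre_def dest!: yb)
      have "sorted_wrt (<) zs" using yne(4) by (simp add: zs_def sorted_wrt_map)
      moreover have "\<forall>x\<in>set zs. x > a0" using a0 by (auto simp: zs_def dest!: yb)
      ultimately show "sorted_wrt (<) (pre @ zs)" using a0 by (auto simp: pre_def sorted_wrt_append)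
    qed
    ultimately have "path_weight S pre + 1 + path_weight D ys \<le> maxw n S"
      using maxw_ge pz by metis
    then show ?thesis by linarith
  qed
  have m1: "1 \<le> n - i" using i by simp
  have g1: "1 \<le> maxw n S" using key[OF path_ex[OF m1]] by simp
  have "maxw (n - i) D \<le> maxw n S - 1"
    by (rule maxw_le[OF m1]) (use key in force)
  then show "1 + maxw (n - i) D \<le> maxw n S" using g1 by linarith
qed




definition wt :: "real \<Rightarrow> ('a) set \<Rightarrow> 'a set \<Rightarrow> real" where
  "wt p E S = p ^ card S * (1 - p) ^ card (E - S)"

lemma smult_sum_right: "smult c (\<Sum>x\<in>A. f x) = (\<Sum>x\<in>A. smult c (f x))"
  by (induct A rule: infinite_finite_induct) (auto simp: smult_add_right)

lemma pow_split:
  assumes "finite E1" "finite E2" "E1 \<inter> E2 = {}"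
  shows "(\<Sum>S\<in>Pow (E1 \<union> E2). f S) = (\<Sum>S1\<in>Pow E1. \<Sum>S2\<in>Pow E2. f (S1 \<union> S2))"
proof -
  have "(\<Sum>S\<in>Pow (E1 \<union> E2). f S) = (\<Sum>x\<in>Pow E1 \<times> Pow E2. f (fst x \<union> snd x))"
    by (rule sum.reindex_bij_witness[where i = "\<lambda>x. fst x \<union> snd x" and j = "\<lambda>S. (S \<inter> E1, S \<inter> E2)"])
       (use assms in \<open>auto simp: Int_absorb2 Int_Un_distrib[symmetric]\<close>)
  also have "\<dots> = (\<Sum>S1\<in>Pow E1. \<Sum>S2\<in>Pow E2. f (S1 \<union> S2))"
    by (subst sum.cartesian_product) (simp add: case_prod_beta)
  finally show ?thesis .
qed

lemma wt_union:
  assumes "finite E1" "finite E2" "E1 \<inter> E2 = {}" "S1 \<subseteq> E1" "S2 \<subseteq> E2"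
  shows "wt p (E1 \<union> E2) (S1 \<union> S2) = wt p E1 S1 * wt p E2 S2"
proof -
  have "card (S1 \<union> S2) = card S1 + card S2"
    using assms by (intro card_Un_disjoint) (auto intro: finite_subset)
  moreover have "(E1 \<union> E2) - (S1 \<union> S2) = (E1 - S1) \<union> (E2 - S2)" using assms by auto
  moreover have "card ((E1 - S1) \<union> (E2 - S2)) = card (E1 - S1) + card (E2 - S2)"
    using assms by (intro card_Un_disjoint) auto
  ultimately show ?thesis by (simp add: wt_def power_add)
qed

lemma wt_sum1: "finite E \<Longrightarrow> (\<Sum>S\<in>Pow E. wt p E S) = 1"
proof (induction E rule: finite_induct)
  case empty
  then show ?case by (simp add: wt_def)
next
  case (insert x F)
  have "(\<Sum>S\<in>Pow ({x} \<union> F). wt p ({x} \<union> F) S) = (\<Sum>S1\<in>Pow {x}. \<Sum>S2\<in>Pow F. wt p ({x} \<union> F) (S1 \<union> S2))"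
    using insert by (intro pow_split) auto
  also have "\<dots> = (\<Sum>S1\<in>Pow {x}. \<Sum>S2\<in>Pow F. wt p {x} S1 * wt p F S2)"
    using insert by (intro sum.cong refl wt_union) auto
  also have "\<dots> = (\<Sum>S1\<in>Pow {x}. wt p {x} S1)"
    using insert by (simp add: sum_distrib_left[symmetric])
  also have "\<dots> = 1"
  proof -
    have "Pow {x} = {{}, {x}}" by blast
    then show ?thesis by (simp add: wt_def)
  qed
  finally show ?case by simp
qed

lemma wt_sum_ne: "finite E \<Longrightarrow> (\<Sum>S\<in>Pow E - {{}}. wt p E S) = 1 - (1 - p) ^ card E"
  using wt_sum1[of E p] by (subst sum_diff1) (auto simp: wt_def)

lemma card_edges: "card (edges n) = n choose 2"
proof (induction n)
  case 0
  have "edges 0 = {}" by (auto simp: edges_def)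
  then show ?case by simp
next
  case (Suc n)
  have e: "edges (Suc n) = edges n \<union> (\<lambda>a. (a, Suc n)) ` {1..n}"
    by (auto simp: edges_def)
  have fin: "finite (edges n)" by (rule finite_subset[of _ "{0..n} \<times> {0..n}"]) (auto simp: edges_def)
  have "card (edges (Suc n)) = card (edges n) + card ((\<lambda>a. (a, Suc n)) ` {1..n})"
    unfolding e using fin by (intro card_Un_disjoint) (auto simp: edges_def)
  also have "card ((\<lambda>a. (a, Suc n)) ` {1..n}) = n" by (subst card_image) (auto simp: inj_on_def)
  finally show ?case using Suc by (simp add: numeral_2_eq_2)
qed

lemma finite_edges[simp]: "finite (edges n)"
  by (rule finite_subset[of _ "{0..n} \<times> {0..n}"]) (auto simp: edges_def)

lemma pw_empty: "path_weight {} xs = 0"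
  by (induction xs rule: induct_list012) auto

lemma maxw_empty: "n \<ge> 1 \<Longrightarrow> maxw n {} = 0"
  using maxw_le[of n "{}" 0] pw_empty by auto




definition Pset :: "nat \<Rightarrow> nat \<Rightarrow> (nat \<times> nat) set set" where
  "Pset n i = {S. S \<subseteq> edges n \<and> (\<forall>(a,b)\<in>S. i < b) \<and> (\<exists>a. (a, Suc i) \<in> S)}"
definition EA :: "nat \<Rightarrow> (nat \<times> nat) set" where
  "EA i = {(a,b). 1 \<le> a \<and> a \<le> i \<and> b = Suc i}"
definition EB :: "nat \<Rightarrow> nat \<Rightarrow> (nat \<times> nat) set" where
  "EB n i = {(a,b). 1 \<le> a \<and> a \<le> i \<and> Suc i < b \<and> b \<le> n}"
definition EC :: "nat \<Rightarrow> nat \<Rightarrow> (nat \<times> nat) set" where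
  "EC n i = {(a,b). i < a \<and> a < b \<and> b \<le> n}"
definition shf :: "nat \<Rightarrow> nat \<times> nat \<Rightarrow> nat \<times> nat" where
  "shf i = (\<lambda>(a,b). (a+i, b+i))"
definition pull :: "nat \<Rightarrow> (nat \<times> nat) set \<Rightarrow> (nat \<times> nat) set" where
  "pull i C = {(x,y). (x+i, y+i) \<in> C}"

lemma EA_img: "EA i = (\<lambda>a. (a, Suc i)) ` {1..i}"
  by (auto simp: EA_def)
lemma card_EA: "card (EA i) = i"
  unfolding EA_img by (subst card_image) (auto simp: inj_on_def)
lemma fin_E[simp]: "finite (EA i)" "finite (EB n i)" "finite (EC n i)"
  by (rule finite_subset[of _ "{0..Suc (i+n)} \<times> {0..Suc (i+n)}"]; auto simp: EA_def EB_def EC_def)+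

lemma inj_shf: "inj (shf i)"
  by (auto simp: inj_def shf_def)

lemma EC_img: "i < n \<Longrightarrow> EC n i = shf i ` edges (n - i)"
proof
  show "EC n i \<subseteq> shf i ` edges (n - i)"
  proof
    fix e assume "e \<in> EC n i"
    then obtain a b where e: "e = (a,b)" "i < a" "a < b" "b \<le> n" by (auto simp: EC_def)
    then have "(a - i, b - i) \<in> edges (n - i)" by (auto simp: edges_def)
    moreover have "e = shf i (a - i, b - i)" using e by (simp add: shf_def)
    ultimately show "e \<in> shf i ` edges (n - i)" by blast
  qed
qed (auto simp: EC_def edges_def shf_def)

lemma pull_shf: "pull i (shf i ` D) = D"
proof
  show "pull i (shf i ` D) \<subseteq> D"
  proof
    fix e assume "e \<in> pull i (shf i ` D)"
    then obtain x y where e: "e = (x,y)" "(x+i, y+i) \<in> shf i ` D" by (auto simp: pull_def)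
    then obtain a b where "(a,b) \<in> D" "(x+i, y+i) = shf i (a,b)" by auto
    then show "e \<in> D" using e by (simp add: shf_def)
  qed
  show "D \<subseteq> pull i (shf i ` D)"
  proof
    fix e assume "e \<in> D"
    then obtain a b where e: "e = (a,b)" "(a,b) \<in> D" by (cases e) auto
    then have "(a+i,b+i) \<in> shf i ` D" by (metis image_eqI shf_def case_prod_conv)
    then show "e \<in> pull i (shf i ` D)" using e by (simp add: pull_def)
  qed
qed

lemma pgf_shift:
  assumes "i < n"
  shows "(\<Sum>C\<in>Pow (EC n i). smult (wt p (EC n i) C) ([:0,1:] ^ maxw (n - i) (pull i C))) = pgf p (n - i)"
proof -
  have "(\<Sum>C\<in>Pow (EC n i). smult (wt p (EC n i) C) ([:0,1:] ^ maxw (n - i) (pull i C)))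
      = (\<Sum>D\<in>Pow (edges (n - i)). smult (wt p (EC n i) (shf i ` D)) ([:0,1:] ^ maxw (n - i) (pull i (shf i ` D))))"
  proof -
    have inj: "inj_on (image (shf i)) (Pow (edges (n - i)))"
      by (rule inj_on_image_Pow) (rule inj_on_subset[OF inj_shf], simp)
    have pw: "Pow (shf i ` edges (n - i)) = image (shf i) ` Pow (edges (n - i))"
      by (rule image_Pow_surj[symmetric]) simp
    show ?thesis unfolding EC_img[OF assms] pw sum.reindex[OF inj] by (simp add: comp_def)
  qed
  also have "\<dots> = (\<Sum>D\<in>Pow (edges (n - i)). smult (config_prob p (n - i) D) ([:0,1:] ^ maxw (n - i) D))"
  proof (intro sum.cong refl)
    fix D assume D: "D \<in> Pow (edges (n - i))"
    have "card (shf i ` D) = card D" by (rule card_image) (rule inj_on_subset[OF inj_shf], simp)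
    moreover have "shf i ` edges (n - i) - shf i ` D = shf i ` (edges (n - i) - D)"
      using inj_shf by (simp add: image_set_diff)
    moreover have "card (shf i ` (edges (n - i) - D)) = card (edges (n - i) - D)"
      by (rule card_image) (rule inj_on_subset[OF inj_shf], simp)
    ultimately have "wt p (EC n i) (shf i ` D) = config_prob p (n - i) D"
      unfolding EC_img[OF assms] by (simp add: wt_def config_prob_def)
    then show "smult (wt p (EC n i) (shf i ` D)) ([:0,1:] ^ maxw (n - i) (pull i (shf i ` D)))
             = smult (config_prob p (n - i) D) ([:0,1:] ^ maxw (n - i) D)"
      by (simp add: pull_shf)
  qed
  finally show ?thesis by (simp add: pgf_def)
qed




lemma edges_decomp: "i < n \<Longrightarrow> edges n = edges i \<union> (EA i \<union> (EB n i \<union> EC n i))"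
  by (auto simp: edges_def EA_def EB_def EC_def)

lemma Pset_sum:
  assumes i: "1 \<le> i" "i < n"
  shows "(\<Sum>S\<in>Pset n i. smult (config_prob p n S) ([:0,1:] ^ maxw n S))
       = smult ((1 - p) ^ (i choose 2) * (1 - (1 - p) ^ i)) ([:0,1:] * pgf p (n - i))"
proof -
  define F where "F S = smult (config_prob p n S) ([:0,1:] ^ maxw n S)" for S
  define G where "G C = smult (wt p (EC n i) C) ([:0,1:] ^ maxw (n - i) (pull i C))" for C
  define q where "q = 1 - p"
  have "(\<Sum>S\<in>Pset n i. F S) = (\<Sum>x\<in>(Pow (EA i) - {{}}) \<times> (Pow (EB n i) \<times> Pow (EC n i)). F (fst x \<union> (fst (snd x) \<union> snd (snd x))))"
  proof (rule sum.reindex_bij_witness[where i = "\<lambda>x. fst x \<union> (fst (snd x) \<union> snd (snd x))"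
                                     and j = "\<lambda>S. (S \<inter> EA i, S \<inter> EB n i, S \<inter> EC n i)"])
    fix S assume S: "S \<in> Pset n i"
    then have S1: "S \<subseteq> edges n" "\<forall>(a,b)\<in>S. i < b" and S2: "\<exists>a. (a, Suc i) \<in> S" by (auto simp: Pset_def)
    have sub: "S \<subseteq> EA i \<union> (EB n i \<union> EC n i)"
      using S1 by (fastforce simp: edges_def EA_def EB_def EC_def)
    then show "fst (S \<inter> EA i, S \<inter> EB n i, S \<inter> EC n i) \<union> (fst (snd (S \<inter> EA i, S \<inter> EB n i, S \<inter> EC n i)) \<union> snd (snd (S \<inter> EA i, S \<inter> EB n i, S \<inter> EC n i))) = S"
      by auto
    then show "F (fst (S \<inter> EA i, S \<inter> EB n i, S \<inter> EC n i) \<union> (fst (snd (S \<inter> EA i, S \<inter> EB n i, S \<inter> EC n i)) \<union> snd (snd (S \<inter> EA i, S \<inter> EB n i, S \<inter> EC n i)))) = F S"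
      by simp
    obtain a where a: "(a, Suc i) \<in> S" using S2 by blast
    then have "(a, Suc i) \<in> EA i" using S1 by (auto simp: edges_def EA_def)
    then show "(S \<inter> EA i, S \<inter> EB n i, S \<inter> EC n i) \<in> (Pow (EA i) - {{}}) \<times> (Pow (EB n i) \<times> Pow (EC n i))"
      using a by auto
  next
    fix x assume x: "x \<in> (Pow (EA i) - {{}}) \<times> (Pow (EB n i) \<times> Pow (EC n i))"
    obtain A B C where xd: "x = (A, B, C)" by (cases x) auto
    have d1: "EA i \<inter> EB n i = {}" "EA i \<inter> EC n i = {}" "EB n i \<inter> EC n i = {}"
      by (auto simp: EA_def EB_def EC_def)
    show "((fst x \<union> (fst (snd x) \<union> snd (snd x))) \<inter> EA i, (fst x \<union> (fst (snd x) \<union> snd (snd x))) \<inter> EB n i,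
           (fst x \<union> (fst (snd x) \<union> snd (snd x))) \<inter> EC n i) = x"
      using x d1 xd by auto
    have "A \<noteq> {}" "A \<subseteq> EA i" "B \<subseteq> EB n i" "C \<subseteq> EC n i" using x xd by auto
    then obtain a where "(a, Suc i) \<in> A" by (force simp: EA_def)
    moreover have "A \<union> (B \<union> C) \<subseteq> edges n" using \<open>A \<subseteq> EA i\<close> \<open>B \<subseteq> EB n i\<close> \<open>C \<subseteq> EC n i\<close> i
      by (auto simp: edges_def EA_def EB_def EC_def)
    moreover have "\<forall>(a,b)\<in>A \<union> (B \<union> C). i < b" using \<open>A \<subseteq> EA i\<close> \<open>B \<subseteq> EB n i\<close> \<open>C \<subseteq> EC n i\<close>
      by (auto simp: EA_def EB_def EC_def)
    ultimately show "fst x \<union> (fst (snd x) \<union> snd (snd x)) \<in> Pset n i"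
      using xd by (auto simp: Pset_def)
  qed
  also have "\<dots> = (\<Sum>A\<in>Pow (EA i) - {{}}. \<Sum>B\<in>Pow (EB n i). \<Sum>C\<in>Pow (EC n i). F (A \<union> (B \<union> C)))"
    by (simp add: sum.cartesian_product case_prod_beta)
  also have "\<dots> = (\<Sum>A\<in>Pow (EA i) - {{}}. \<Sum>B\<in>Pow (EB n i). \<Sum>C\<in>Pow (EC n i).
                     smult (wt p (EA i) A) (smult (wt p (EB n i) B) (smult (q ^ (i choose 2)) ([:0,1:] * G C))))"
  proof (intro sum.cong refl)
    fix A B C assume A: "A \<in> Pow (EA i) - {{}}" and B: "B \<in> Pow (EB n i)" and C: "C \<in> Pow (EC n i)"
    have d: "edges i \<inter> (EA i \<union> (EB n i \<union> EC n i)) = {}" "EA i \<inter> (EB n i \<union> EC n i) = {}" "EB n i \<inter> EC n i = {}"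
      by (auto simp: edges_def EA_def EB_def EC_def)
    have "config_prob p n ({} \<union> (A \<union> (B \<union> C))) = wt p (edges i) {} * (wt p (EA i) A * (wt p (EB n i) B * wt p (EC n i) C))"
    proof -
      have w1: "wt p (edges i \<union> (EA i \<union> (EB n i \<union> EC n i))) ({} \<union> (A \<union> (B \<union> C)))
          = wt p (edges i) {} * wt p (EA i \<union> (EB n i \<union> EC n i)) (A \<union> (B \<union> C))"
        by (rule wt_union) (use A B C d in auto)
      have w2: "wt p (EA i \<union> (EB n i \<union> EC n i)) (A \<union> (B \<union> C)) = wt p (EA i) A * wt p (EB n i \<union> EC n i) (B \<union> C)"
        by (rule wt_union) (use A B C d in auto)
      have w3: "wt p (EB n i \<union> EC n i) (B \<union> C) = wt p (EB n i) B * wt p (EC n i) C"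
        by (rule wt_union) (use A B C d in auto)
      have cpw: "config_prob p n = wt p (edges n)" by (auto simp: fun_eq_iff config_prob_def wt_def)
      show ?thesis unfolding cpw edges_decomp[OF i(2)] w1 w2 w3 ..
    qed
    then have cp: "config_prob p n (A \<union> (B \<union> C)) = q ^ (i choose 2) * wt p (EA i) A * wt p (EB n i) B * wt p (EC n i) C"
      by (simp add: wt_def card_edges q_def)
    obtain a where a: "(a, Suc i) \<in> A" using A by (force simp: EA_def)
    have "maxw n (A \<union> (B \<union> C)) = 1 + maxw (n - i) (pull i C)"
    proof (rule maxw_split[OF i])
      show "\<forall>(a, b)\<in>A \<union> (B \<union> C). i < b" using A B C by (auto simp: EA_def EB_def EC_def)
      show "(a, Suc i) \<in> A \<union> (B \<union> C)" using a by simp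
      show "1 \<le> a" "a < Suc i" using a A by (auto simp: EA_def)
      show "\<forall>x y. 1 \<le> x \<longrightarrow> ((x + i, y + i) \<in> A \<union> (B \<union> C)) = ((x, y) \<in> pull i C)"
        using A B by (auto simp: EA_def EB_def pull_def)
    qed
    then show "F (A \<union> (B \<union> C)) = smult (wt p (EA i) A) (smult (wt p (EB n i) B) (smult (q ^ (i choose 2)) ([:0,1:] * G C)))"
      by (simp add: F_def G_def cp mult_ac)
  qed
  also have "\<dots> = smult (\<Sum>A\<in>Pow (EA i) - {{}}. wt p (EA i) A) (smult (\<Sum>B\<in>Pow (EB n i). wt p (EB n i) B)
                     (smult (q ^ (i choose 2)) ([:0,1:] * (\<Sum>C\<in>Pow (EC n i). G C))))"
  proof -
    have "(\<Sum>C\<in>Pow (EC n i). smult (q ^ (i choose 2)) ([:0,1:] * G C)) = smult (q ^ (i choose 2)) ([:0,1:] * (\<Sum>C\<in>Pow (EC n i). G C))"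
      by (simp only: smult_sum_right sum_distrib_left)
    moreover have "\<And>X Y Z a b (H :: (nat \<times> nat) set \<Rightarrow> real poly). (\<Sum>A\<in>X. \<Sum>B\<in>Y. \<Sum>C\<in>Z. smult (a A) (smult (b B) (H C)))
                = smult (sum a X) (smult (sum b Y) (sum H Z))"
      by (subst smult_sum, subst smult_sum, simp only: smult_sum_right)
    ultimately show ?thesis by metis
  qed
  also have "\<dots> = smult (1 - q ^ i) (smult (q ^ (i choose 2)) ([:0,1:] * pgf p (n - i)))"
    using wt_sum1[of "EB n i" p] wt_sum_ne[of "EA i" p] pgf_shift[OF i(2), of p]
    by (simp add: card_EA G_def q_def)
  finally show ?thesis by (simp add: F_def q_def mult_ac)
qed




lemma pow_decomp: "n \<ge> 1 \<Longrightarrow> Pow (edges n) = insert {} (\<Union>i\<in>{1..n-1}. Pset n i)"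
proof (intro equalityI subsetI)
  fix S assume n: "n \<ge> 1" and "S \<in> Pow (edges n)"
  then have S: "S \<subseteq> edges n" by auto
  show "S \<in> insert {} (\<Union>i\<in>{1..n-1}. Pset n i)"
  proof (cases "S = {}")
    case False
    have fin: "finite S" using finite_subset[OF S finite_edges] .
    define b0 where "b0 = Min (snd ` S)"
    have "b0 \<in> snd ` S" unfolding b0_def using fin False by (intro Min_in) auto
    then obtain a where a: "(a, b0) \<in> S" by force
    have mn: "\<forall>(a,b)\<in>S. b0 \<le> b" unfolding b0_def using fin by (auto intro!: Min_le simp: image_iff) (metis snd_conv)
    have "1 \<le> a" "a < b0" "b0 \<le> n" using a S by (auto simp: edges_def)
    then have "b0 - 1 \<in> {1..n-1}" by auto
    moreover have "S \<in> Pset n (b0 - 1)"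
      unfolding Pset_def
    proof (intro CollectI conjI)
      show "S \<subseteq> edges n" by (rule S)
      show "\<forall>(a,b)\<in>S. b0 - 1 < b" using mn \<open>a < b0\<close> by auto
      show "\<exists>a. (a, Suc (b0 - 1)) \<in> S" using a \<open>a < b0\<close> by (intro exI[of _ a]) simp
    qed
    ultimately show ?thesis by blast
  qed simp
next
  fix S assume "S \<in> insert {} (\<Union>i\<in>{1..n-1}. Pset n i)"
  then show "S \<in> Pow (edges n)" unfolding Pset_def by blast
qed

lemma recursion:
  assumes n: "n \<ge> 1"
  shows "pgf p n = (\<Sum>i=1..n-1. smult ((1 - p) ^ (i choose 2) - (1 - p) ^ ((i + 1) choose 2))
                               ([:0, 1:] * pgf p (n - i))) + [:(1 - p) ^ (n choose 2):]"
proof -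
  define F where "F S = smult (config_prob p n S) ([:0,1:] ^ maxw n S)" for S
  have fin: "finite (\<Union>i\<in>{1..n-1}. Pset n i)"
    by (rule finite_subset[of _ "Pow (edges n)"]) (auto simp: Pset_def)
  have notin: "{} \<notin> (\<Union>i\<in>{1..n-1}. Pset n i)" by (auto simp: Pset_def)
  have "pgf p n = F {} + sum F (\<Union>i\<in>{1..n-1}. Pset n i)"
    unfolding pgf_def pow_decomp[OF n] F_def[symmetric] using fin notin by simp
  also have "sum F (\<Union>i\<in>{1..n-1}. Pset n i) = (\<Sum>i=1..n-1. sum F (Pset n i))"
  proof (rule sum.UNION_disjoint)
    show "\<forall>i\<in>{1..n - 1}. finite (Pset n i)"
      by (auto intro: finite_subset[of _ "Pow (edges n)"] simp: Pset_def)
    show "\<forall>i\<in>{1..n - 1}. \<forall>j\<in>{1..n - 1}. i \<noteq> j \<longrightarrow> Pset n i \<inter> Pset n j = {}"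
    proof (intro ballI impI)
      fix i j :: nat assume "i \<noteq> j"
      show "Pset n i \<inter> Pset n j = {}"
      proof (rule ccontr)
        assume "Pset n i \<inter> Pset n j \<noteq> {}"
        then obtain S where "S \<in> Pset n i" "S \<in> Pset n j" by blast
        then obtain a b where "(a, Suc i) \<in> S" "(b, Suc j) \<in> S" "\<forall>(x,y)\<in>S. i < y" "\<forall>(x,y)\<in>S. j < y"
          by (auto simp: Pset_def)
        then have "j < Suc i" "i < Suc j" by auto
        then show False using \<open>i \<noteq> j\<close> by simp
      qed
    qed
  qed simp
  also have "\<dots> = (\<Sum>i=1..n-1. smult ((1 - p) ^ (i choose 2) - (1 - p) ^ ((i + 1) choose 2)) ([:0, 1:] * pgf p (n - i)))"
  proof (intro sum.cong refl)
    fix i assume i: "i \<in> {1..n-1}"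
    have c: "Suc i choose 2 = (i choose 2) + i"
      by (simp add: numeral_2_eq_2)
    show "sum F (Pset n i) = smult ((1 - p) ^ (i choose 2) - (1 - p) ^ ((i + 1) choose 2)) ([:0, 1:] * pgf p (n - i))"
    proof -
      have e: "(1 - p) ^ (i choose 2) * (1 - (1 - p) ^ i) = (1 - p) ^ (i choose 2) - (1 - p) ^ ((i + 1) choose 2)"
        by (simp only: Suc_eq_plus1[symmetric] c power_add right_diff_distrib mult_1_right)
      have i1: "1 \<le> i" and i2: "i < n" using i n by auto
      show ?thesis unfolding F_def Pset_sum[OF i1 i2, of p] e by (rule refl)
    qed
  qed
  also have "F {} = [:(1 - p) ^ (n choose 2):]"
    using n by (simp add: F_def config_prob_def maxw_empty card_edges)
  finally show ?thesis by (simp add: add.commute)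
qed



unbundle fps_syntax

lemma fps_part:
  assumes rec: "\<forall>n\<ge>1. pgf p n =
            (\<Sum>i=1..n-1. smult ((1 - p) ^ (i choose 2) - (1 - p) ^ ((i + 1) choose 2))
                               ([:0, 1:] * pgf p (n - i)))
            + [:(1 - p) ^ (n choose 2):]"
  shows "(Zfps p - 1) * (1 - fps_const [:0, 1:] * (Afps p - Bfps p)) = fps_X * Bfps p"
proof -
  define U where "U = Zfps p - 1"
  define K where "K = Afps p - Bfps p"
  define t :: "real poly" where "t = [:0, 1:]"
  have U0: "U $ 0 = 0" by (simp add: U_def Zfps_def EY_def)
  have Un: "U $ n = pgf p n" if "n \<ge> 1" for n using that by (simp add: U_def Zfps_def EY_def)
  have K0: "K $ 0 = 0" by (simp add: K_def Afps_def Bfps_def numeral_2_eq_2)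
  have Kn: "K $ i = [:(1 - p) ^ (i choose 2) - (1 - p) ^ ((i + 1) choose 2):]" for i
    by (simp add: K_def Afps_def Bfps_def)
  have key: "U = fps_const t * (K * U) + fps_X * Bfps p"
  proof (rule fps_ext)
    fix n
    show "U $ n = (fps_const t * (K * U) + fps_X * Bfps p) $ n"
    proof (cases "n = 0")
      case True
      then show ?thesis using U0 K0 by simp
    next
      case False
      then have n: "n \<ge> 1" by simp
      have "(K * U) $ n = (\<Sum>i=0..n. K $ i * U $ (n - i))" by (rule fps_mult_nth)
      also have "\<dots> = (\<Sum>i=1..n-1. K $ i * U $ (n - i))"
      proof -
        have "{0..n} = insert 0 (insert n {1..n-1})" using n by auto
        then show ?thesis using n K0 U0 by simp
      qed
      also have "\<dots> = (\<Sum>i=1..n-1. smult ((1 - p) ^ (i choose 2) - (1 - p) ^ ((i + 1) choose 2)) (pgf p (n - i)))"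
        by (intro sum.cong refl) (auto simp: Kn Un)
      finally have "(fps_const t * (K * U)) $ n = (\<Sum>i=1..n-1. smult ((1 - p) ^ (i choose 2) - (1 - p) ^ ((i + 1) choose 2)) (t * pgf p (n - i)))"
        by (simp add: sum_distrib_left)
      moreover have "(fps_X * Bfps p) $ n = [:(1 - p) ^ (n choose 2):]"
        using n by (simp add: Bfps_def)
      ultimately show ?thesis using rec n Un[OF n] by (simp add: t_def)
    qed
  qed
  have "U * (1 - fps_const t * K) = U - fps_const t * (K * U)" by (simp add: algebra_simps)
  also have "\<dots> = fps_X * Bfps p" using key by (simp add: algebra_simps)
  finally show ?thesis by (simp add: U_def K_def t_def)
qed



theorem theorem3:
  fixes p :: real
  assumes "0 < p" and "p < 1"
  shows "(\<forall>n\<ge>1. pgf p n =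
            (\<Sum>i=1..n-1. smult ((1 - p) ^ (i choose 2) - (1 - p) ^ ((i + 1) choose 2))
                               ([:0, 1:] * pgf p (n - i)))
            + [:(1 - p) ^ (n choose 2):])
       \<and> (Zfps p - 1) * (1 - fps_const [:0, 1:] * (Afps p - Bfps p)) = fps_X * Bfps p"
proof -
  have r: "\<forall>n\<ge>1. pgf p n =
            (\<Sum>i=1..n-1. smult ((1 - p) ^ (i choose 2) - (1 - p) ^ ((i + 1) choose 2))
                               ([:0, 1:] * pgf p (n - i)))
            + [:(1 - p) ^ (n choose 2):]"
    using recursion by blast
  show ?thesis using r fps_part[OF r] by blast
qed

end
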